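(* Let $0\le\lambda<\gamma\le\delta$ and let $\mathfrak{f}=\mathfrak{s}+\overline{\mathfrak{t}}\in\mathcal{H}^0$ with $\mathfrak{s}(z)=z+\sum_{m\ge2}a_mz^m$, $\mathfrak{t}(z)=\sum_{m\ge2}b_mz^m$ satisfy $$\sum_{m=2}^\infty m^2[2\gamma+(\delta-\gamma)(m-1)](|a_m|+|b_m|)\le2(\gamma-\lambda).$$ Then $\mathfrak{f}$ is stable harmonic close-to-convex in $\mathcal{U}$.
   Context: Let $\mathcal{U}=\{z\in\mathbb{C}:|z|<1\}$. $\mathcal{H}^0$ denotes the class of complex-valued harmonic functions $\mathfrak{f}=\mathfrak{s}+\overline{\mathfrak{t}}$ on $\mathcal{U}$, where $\mathfrak{s}(z)=z+\sum_{m\ge2}a_mz^m$ and $\mathfrak{t}(z)=\sum_{m\ge2}b_mz^m$ are analytic in $\mathcal{U}$. A harmonic function is close-to-convex in $\mathcal{U}$ if it is univalent in $\mathcal{U}$ and maps $\mathcal{U}$ onto a close-to-convex domain, i.e. a simply connected domain whose complement in $\mathbb{C}$ is a union of non-crossing half-lines. A sense-preserving harmonic map $\mathfrak{f}=\mathfrak{s}+\overline{\mathfrak{t}}$ is stable harmonic close-to-convex in $\mathcal{U}$ if all functions $\mathfrak{f}_\epsilon=\mathfrak{s}+\epsilon\overline{\mathfrak{t}}$ with $|\epsilon|=1$ are close-to-convex in $\mathcal{U}$. *)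

theory Defs
  imports "HOL-Analysis.Analysis"
begin

definition unit_disk :: "complex set" where
  "unit_disk = ball 0 1"

definition in_H0 :: "(complex \<Rightarrow> complex) \<Rightarrow> (complex \<Rightarrow> complex)
    \<Rightarrow> (nat \<Rightarrow> complex) \<Rightarrow> (nat \<Rightarrow> complex) \<Rightarrow> bool" where
  "in_H0 s t a b \<longleftrightarrow>
     s holomorphic_on unit_disk \<and> t holomorphic_on unit_disk \<and>
     a 0 = 0 \<and> a 1 = 1 \<and> b 0 = 0 \<and> b 1 = 0 \<and>
     (\<forall>z\<in>unit_disk. (\<lambda>m. a m * z ^ m) sums s z) \<and>
     (\<forall>z\<in>unit_disk. (\<lambda>m. b m * z ^ m) sums t z)"

definition harm :: "(complex \<Rightarrow> complex) \<Rightarrow> (complex \<Rightarrow> complex) \<Rightarrow> complex \<Rightarrow> complex" where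
  "harm s t z = s z + cnj (t z)"

definition half_line :: "complex \<Rightarrow> complex \<Rightarrow> complex set" where
  "half_line p d = {p + of_real r * d | r. r \<ge> 0}"

definition open_half_line :: "complex \<Rightarrow> complex \<Rightarrow> complex set" where
  "open_half_line p d = {p + of_real r * d | r. r > 0}"

definition close_to_convex_domain :: "complex set \<Rightarrow> bool" where
  "close_to_convex_domain D \<longleftrightarrow>
     open D \<and> connected D \<and> D \<noteq> {} \<and> simply_connected D \<and>
     (\<exists>H :: (complex \<times> complex) set.
        (\<forall>(p, d)\<in>H. d \<noteq> 0) \<and>
        (\<forall>(p, d)\<in>H. \<forall>(q, e)\<in>H. half_line p d \<noteq> half_line q e \<longrightarrow>
             open_half_line p d \<inter> open_half_line q e = {}) \<and>
        - D = (\<Union>(p, d)\<in>H. half_line p d))"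

definition close_to_convex_in_U :: "(complex \<Rightarrow> complex) \<Rightarrow> bool" where
  "close_to_convex_in_U f \<longleftrightarrow> inj_on f unit_disk \<and> close_to_convex_domain (f ` unit_disk)"

definition sense_preserving :: "(complex \<Rightarrow> complex) \<Rightarrow> (complex \<Rightarrow> complex) \<Rightarrow> bool" where
  "sense_preserving s t \<longleftrightarrow> (\<forall>z\<in>unit_disk. norm (deriv t z) < norm (deriv s z))"

definition stable_harmonic_ctc :: "(complex \<Rightarrow> complex) \<Rightarrow> (complex \<Rightarrow> complex) \<Rightarrow> bool" where
  "stable_harmonic_ctc s t \<longleftrightarrow> sense_preserving s t \<and>
     (\<forall>\<epsilon>::complex. norm \<epsilon> = 1 \<longrightarrow> close_to_convex_in_U (harm s (\<lambda>z. \<epsilon> * t z)))"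

end

theory Submission imports Defs begin

lemma norm_sums_le:
  fixes f :: "nat \<Rightarrow> complex"
  assumes "f sums S" "\<And>n. norm (f n) \<le> g n" "summable g"
  shows "norm S \<le> suminf g"
proof -
  have sn: "summable (\<lambda>n. norm (f n))"
    by (rule summable_comparison_test'[OF assms(3)]) (use assms(2) in auto)
  have "S = suminf f" using assms(1) by (simp add: sums_iff)
  also have "norm (suminf f) \<le> (\<Sum>n. norm (f n))" by (rule summable_norm[OF sn])
  also have "\<dots> \<le> suminf g" by (rule suminf_le[OF assms(2) sn assms(3)])
  finally show ?thesis .
qed

lemma one_minus_pow_le:
  fixes t :: real
  assumes "0 \<le> t" "t \<le> 1"
  shows "1 - t ^ m \<le> real m * (1 - t)"
proof (induction m)
  case 0 then show ?case by simp
next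
  case (Suc m)
  have "t ^ m * (1 - t) \<le> 1 - t" using assms by (simp add: mult_left_le_one_le zero_le_power power_le_one)
  then show ?case using Suc by (simp add: algebra_simps)
qed

lemma pow_diff_le:
  fixes t :: real
  assumes "0 \<le> t" "t \<le> 1" "m \<ge> 1"
  shows "\<bar>t - t ^ m\<bar> \<le> real m * (1 - t)"
proof -
  have "t ^ m \<le> t" using assms
    by (metis power_decreasing power_one_right)
  moreover have "t \<le> 1" using assms by simp
  moreover have "1 - t ^ m \<le> real m * (1 - t)" by (rule one_minus_pow_le[OF assms(1,2)])
  ultimately show ?thesis by simp
qed

lemma powser_lip:
  fixes d :: "nat \<Rightarrow> complex" and P :: "complex \<Rightarrow> complex"
  assumes "\<forall>z\<in>unit_disk. (\<lambda>m. d m * z ^ m) sums P z"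
    and "summable (\<lambda>m. real m * norm (d m))"
    and "z1 \<in> unit_disk" "z2 \<in> unit_disk"
  shows "norm (P z1 - P z2) \<le> (\<Sum>m. real m * norm (d m)) * norm (z1 - z2)"
proof -
  have n1: "norm z1 \<le> 1" "norm z2 \<le> 1" using assms(3,4) by (auto simp: unit_disk_def)
  have "(\<lambda>m. d m * z1 ^ m - d m * z2 ^ m) sums (P z1 - P z2)"
    using assms(1,3,4) by (intro sums_diff) auto
  then have "norm (P z1 - P z2) \<le> (\<Sum>m. real m * norm (d m) * norm (z1 - z2))"
  proof (rule norm_sums_le)
    fix m
    have "norm (d m * z1 ^ m - d m * z2 ^ m) = norm (d m) * norm (z1 ^ m - z2 ^ m)"
      by (simp add: right_diff_distrib[symmetric] norm_mult)
    also have "\<dots> \<le> norm (d m) * (real m * norm (z1 - z2))"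
      by (intro mult_left_mono norm_power_diff n1) auto
    finally show "norm (d m * z1 ^ m - d m * z2 ^ m) \<le> real m * norm (d m) * norm (z1 - z2)"
      by (simp add: algebra_simps)
  next
    show "summable (\<lambda>m. real m * norm (d m) * norm (z1 - z2))"
      using assms(2) by (rule summable_mult2)
  qed
  also have "\<dots> = (\<Sum>m. real m * norm (d m)) * norm (z1 - z2)"
    using assms(2) by (rule suminf_mult2[symmetric])
  finally show ?thesis .
qed

lemma powser_scale:
  fixes d :: "nat \<Rightarrow> complex" and P :: "complex \<Rightarrow> complex" and t :: real
  assumes "\<forall>z\<in>unit_disk. (\<lambda>m. d m * z ^ m) sums P z"
    and "summable (\<lambda>m. real m * norm (d m))" and "d 0 = 0"
    and "z0 \<in> unit_disk" "0 \<le> t" "t \<le> 1"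
  shows "norm (of_real t * P z0 - P (of_real t * z0)) \<le> (1 - t) * (\<Sum>m. real m * norm (d m))"
proof -
  have n0: "norm z0 \<le> 1" using assms(4) by (auto simp: unit_disk_def)
  have tz: "of_real t * z0 \<in> unit_disk" using assms(4-6)
    by (auto simp: unit_disk_def norm_mult intro: le_less_trans[OF mult_left_le_one_le])
  have "(\<lambda>m. of_real t * (d m * z0 ^ m) - d m * (of_real t * z0) ^ m) sums (of_real t * P z0 - P (of_real t * z0))"
    using assms(1,4) tz by (intro sums_diff sums_mult) auto
  then have "norm (of_real t * P z0 - P (of_real t * z0)) \<le> (\<Sum>m. (1 - t) * (real m * norm (d m)))"
  proof (rule norm_sums_le)
    fix m
    have eq: "of_real t * (d m * z0 ^ m) - d m * (of_real t * z0) ^ m = d m * z0 ^ m * of_real (t - t ^ m)"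
      by (simp add: algebra_simps power_mult_distrib)
    show "norm (of_real t * (d m * z0 ^ m) - d m * (of_real t * z0) ^ m) \<le> (1 - t) * (real m * norm (d m))"
    proof (cases "m = 0")
      case True then show ?thesis using assms(3) by simp
    next
      case False
      have "norm (d m * z0 ^ m * of_real (t - t ^ m)) = norm (d m) * norm z0 ^ m * \<bar>t - t ^ m\<bar>"
        by (simp only: norm_mult norm_power norm_of_real)
      also have "\<dots> \<le> norm (d m) * 1 * (real m * (1 - t))"
        using False assms(5,6) n0
        by (intro mult_mono pow_diff_le power_le_one) auto
      finally show ?thesis unfolding eq by (simp add: algebra_simps)
    qed
  next
    show "summable (\<lambda>m. (1 - t) * (real m * norm (d m)))" using assms(2) by (rule summable_mult)
  qed
  also have "\<dots> = (1 - t) * (\<Sum>m. real m * norm (d m))"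
    using assms(2) by (rule suminf_mult)
  finally show ?thesis .
qed

lemma deriv_lip:
  fixes P :: "complex \<Rightarrow> complex"
  assumes "(P has_field_derivative D) (at z)" "open S" "z \<in> S"
    and "\<And>x. x \<in> S \<Longrightarrow> norm (P x - P z) \<le> L * norm (x - z)"
  shows "norm D \<le> L"
proof -
  have "((\<lambda>y. (P y - P z) / (y - z)) \<longlongrightarrow> D) (at z)"
    using assms(1) by (simp add: has_field_derivative_iff)
  then have lim: "((\<lambda>y. norm ((P y - P z) / (y - z))) \<longlongrightarrow> norm D) (at z)"
    by (rule tendsto_norm)
  have "eventually (\<lambda>y. y \<in> S) (nhds z)"
    by (rule eventually_nhds_in_open[OF assms(2,3)])
  then have ev: "eventually (\<lambda>y. norm ((P y - P z) / (y - z)) \<le> L) (at z)"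
    unfolding eventually_at_filter
  proof (rule eventually_mono)
    fix y assume y: "y \<in> S"
    show "y \<noteq> z \<longrightarrow> y \<in> UNIV \<longrightarrow> norm ((P y - P z) / (y - z)) \<le> L"
    proof (intro impI)
      assume "y \<noteq> z"
      moreover have "norm (P y - P z) \<le> L * norm (y - z)" using assms(4) y by auto
      ultimately show "norm ((P y - P z) / (y - z)) \<le> L"
        by (simp add: norm_divide divide_le_eq)
    qed
  qed
  show ?thesis by (rule tendsto_upperbound[OF lim ev]) simp
qed

theorem corollary9:
  fixes lam \<gamma> \<delta> :: real
    and s t :: "complex \<Rightarrow> complex"
    and a b :: "nat \<Rightarrow> complex"
  assumes "0 \<le> lam" and "lam < \<gamma>" and "\<gamma> \<le> \<delta>"
    and "in_H0 s t a b"
    and "summable (\<lambda>k. let m = k + 2 in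
            real m ^ 2 * (2 * \<gamma> + (\<delta> - \<gamma>) * (real m - 1)) * (norm (a m) + norm (b m)))"
    and "(\<Sum>k. let m = k + 2 in
            real m ^ 2 * (2 * \<gamma> + (\<delta> - \<gamma>) * (real m - 1)) * (norm (a m) + norm (b m)))
           \<le> 2 * (\<gamma> - lam)"
  shows "stable_harmonic_ctc s t"
proof -
  note H = assms(4)[unfolded in_H0_def]
  have gpos: "\<gamma> > 0" using assms(1,2) by simp
  define \<alpha> where "\<alpha> m = (if m = 1 then 0 else a m)" for m
  define Ka where "Ka = (\<Sum>m. real m * norm (\<alpha> m))"
  define Kb where "Kb = (\<Sum>m. real m * norm (b m))"
  define w where "w m = real m * norm (\<alpha> m) + real m * norm (b m)" for m
  define M where "M = (\<lambda>k. let m = k + 2 in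
            real m ^ 2 * (2 * \<gamma> + (\<delta> - \<gamma>) * (real m - 1)) * (norm (a m) + norm (b m)))"
  have sM: "summable M" using assms(5) by (simp only: M_def)
  have sumM: "suminf M \<le> 2 * (\<gamma> - lam)" using assms(6) by (simp only: M_def)
  have wnn: "0 \<le> w m" for m by (simp add: w_def)
  have wM: "w (k+2) \<le> M k / (4*\<gamma>)" for k
  proof -
    define c where "c = norm (a (k+2)) + norm (b (k+2))"
    have c0: "0 \<le> c" by (simp add: c_def)
    have e2: "0 \<le> real (k+2)^2 * ((\<delta>-\<gamma>)*(real k + 1))"
      using assms(3) by simp
    have e3: "4*\<gamma>*real(k+2) \<le> 2*\<gamma>*real(k+2)^2"
      using gpos by (simp add: power2_eq_square algebra_simps)
    have "real (k+2)^2 * (2*\<gamma> + (\<delta>-\<gamma>)*(real(k+2)-1)) = 2*\<gamma>*real(k+2)^2 + real(k+2)^2*((\<delta>-\<gamma>)*(real k+1))"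
      by (simp add: algebra_simps)
    then have e1: "4*\<gamma>*real(k+2) \<le> real (k+2)^2 * (2*\<gamma> + (\<delta>-\<gamma>)*(real(k+2)-1))"
      using e2 e3 by linarith
    have "M k = real (k+2)^2 * (2*\<gamma> + (\<delta>-\<gamma>)*(real(k+2)-1)) * c"
      by (simp add: M_def c_def Let_def)
    moreover have "w (k+2) = real (k+2) * c" by (simp add: w_def \<alpha>_def c_def algebra_simps)
    ultimately have "4*\<gamma> * w (k+2) \<le> M k"
      using mult_right_mono[OF e1 c0] by (simp add: algebra_simps)
    then show ?thesis using gpos by (simp add: field_simps)
  qed
  have sw2: "summable (\<lambda>k. w (k+2))"
    by (rule summable_comparison_test'[OF summable_divide[OF sM, of "4*\<gamma>"]]) (use wM wnn in auto)
  then have sw: "summable w" by (simp only: summable_iff_shift)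
  have "suminf w = (\<Sum>k. w (k+2)) + sum w {..<2}"
    by (rule suminf_split_initial_segment[OF sw])
  also have "sum w {..<2} = 0"
    using H by (simp add: w_def \<alpha>_def numeral_2_eq_2)
  also have "(\<Sum>k. w (k+2)) \<le> (\<Sum>k. M k / (4*\<gamma>))"
    by (rule suminf_le[OF _ sw2 summable_divide[OF sM]]) (use wM in auto)
  also have "\<dots> = suminf M / (4*\<gamma>)" by (rule suminf_divide[OF sM])
  also have "\<dots> \<le> 2 * (\<gamma> - lam) / (4*\<gamma>)"
    using sumM gpos by (simp add: divide_right_mono)
  also have "\<dots> \<le> 1/2" using gpos assms(1) by (simp add: field_simps)
  finally have sw_le: "suminf w \<le> 1/2" by simp
  have sa: "summable (\<lambda>m. real m * norm (\<alpha> m))"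
    by (rule summable_comparison_test'[OF sw]) (auto simp: w_def)
  have sb: "summable (\<lambda>m. real m * norm (b m))"
    by (rule summable_comparison_test'[OF sw]) (auto simp: w_def)
  have KaKb: "Ka + Kb \<le> 1/2"
  proof -
    have "w = (\<lambda>m. real m * norm (\<alpha> m) + real m * norm (b m))" by (simp add: fun_eq_iff w_def)
    then show ?thesis using sw_le suminf_add[OF sa sb] by (simp add: Ka_def Kb_def)
  qed
  have Ka0: "0 \<le> Ka" unfolding Ka_def by (rule suminf_nonneg[OF sa]) simp
  have Kb0: "0 \<le> Kb" unfolding Kb_def by (rule suminf_nonneg[OF sb]) simp
  have sA: "\<forall>z\<in>unit_disk. (\<lambda>m. \<alpha> m * z ^ m) sums (s z - z)"
  proof
    fix z assume z: "z \<in> unit_disk"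
    have "(\<lambda>m. a m * z ^ m - (if m = 1 then z else 0)) sums (s z - z)"
      using H z sums_single[of 1 "\<lambda>_. z"] by (intro sums_diff) auto
    moreover have "(\<lambda>m. a m * z ^ m - (if m = 1 then z else 0)) = (\<lambda>m. \<alpha> m * z ^ m)"
      using H by (auto simp: fun_eq_iff \<alpha>_def)
    ultimately show "(\<lambda>m. \<alpha> m * z ^ m) sums (s z - z)" by simp
  qed
  have sB: "\<forall>z\<in>unit_disk. (\<lambda>m. b m * z ^ m) sums (t z)" using H by auto
  have al0: "\<alpha> 0 = 0" using H by (simp add: \<alpha>_def)
  have b0: "b 0 = 0" using H by simp
  have LA: "norm ((s z1 - z1) - (s z2 - z2)) \<le> Ka * norm (z1 - z2)"
    if "z1 \<in> unit_disk" "z2 \<in> unit_disk" for z1 z2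
    unfolding Ka_def by (rule powser_lip[OF sA sa that])
  have LB: "norm (t z1 - t z2) \<le> Kb * norm (z1 - z2)"
    if "z1 \<in> unit_disk" "z2 \<in> unit_disk" for z1 z2
    unfolding Kb_def by (rule powser_lip[OF sB sb that])
  have SA: "norm (of_real u * (s z0 - z0) - (s (of_real u * z0) - of_real u * z0)) \<le> (1 - u) * Ka"
    if "z0 \<in> unit_disk" "0 \<le> u" "u \<le> 1" for z0 u
    unfolding Ka_def by (rule powser_scale[OF sA sa al0 that])
  have SB: "norm (of_real u * t z0 - t (of_real u * z0)) \<le> (1 - u) * Kb"
    if "z0 \<in> unit_disk" "0 \<le> u" "u \<le> 1" for z0 u
    unfolding Kb_def by (rule powser_scale[OF sB sb b0 that])
  have s00: "s 0 = 0"
  proof -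
    have z0: "(0::complex) \<in> unit_disk" by (simp add: unit_disk_def)
    have "(\<lambda>m. \<alpha> m * 0 ^ m) sums (s 0 - 0)" using sA z0 by blast
    moreover have "(\<lambda>m. \<alpha> m * (0::complex) ^ m) = (\<lambda>_. 0)" using al0
      by (auto simp: fun_eq_iff power_0_left)
    ultimately have "(\<lambda>_. 0) sums (s 0 - 0)" by simp
    from sums_unique2[OF this sums_zero] show ?thesis by simp
  qed
  have t00: "t 0 = 0"
  proof -
    have z0: "(0::complex) \<in> unit_disk" by (simp add: unit_disk_def)
    have "(\<lambda>m. b m * 0 ^ m) sums (t 0)" using sB z0 by blast
    moreover have "(\<lambda>m. b m * (0::complex) ^ m) = (\<lambda>_. 0)" using b0
      by (auto simp: fun_eq_iff power_0_left)
    ultimately have "(\<lambda>_. 0) sums (t 0)" by simp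
    from sums_unique2[OF this sums_zero] show ?thesis by simp
  qed
  have openU: "open unit_disk" by (simp add: unit_disk_def)
  have sp: "sense_preserving s t"
    unfolding sense_preserving_def
  proof
    fix z assume z: "z \<in> unit_disk"
    have ds: "(s has_field_derivative deriv s z) (at z)"
      using holomorphic_derivI[OF _ openU z] H by blast
    have dt: "(t has_field_derivative deriv t z) (at z)"
      using holomorphic_derivI[OF _ openU z] H by blast
    have dA: "((\<lambda>x. s x - x) has_field_derivative deriv s z - 1) (at z)"
      by (intro derivative_intros ds)
    have n1: "norm (deriv s z - 1) \<le> Ka"
      by (rule deriv_lip[OF dA openU z]) (use LA z in auto)
    have n2: "norm (deriv t z) \<le> Kb"
      by (rule deriv_lip[OF dt openU z]) (use LB z in auto)
    have "norm (1::complex) \<le> norm (deriv s z) + norm (deriv s z - 1)"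
      using norm_triangle_ineq4[of "deriv s z" "deriv s z - 1"] by simp
    then show "norm (deriv t z) < norm (deriv s z)"
      using n1 n2 KaKb Ka0 Kb0 by simp
  qed
  have ctc: "close_to_convex_in_U (harm s (\<lambda>z. \<epsilon> * t z))" if eps: "norm \<epsilon> = 1" for \<epsilon>
  proof -
    define f where "f = harm s (\<lambda>z. \<epsilon> * t z)"
    define G where "G z = (s z - z) + cnj (\<epsilon> * t z)" for z
    have fG: "f z = z + G z" for z by (simp add: f_def G_def harm_def)
    have LG: "norm (G z1 - G z2) \<le> 1/2 * norm (z1 - z2)"
      if "z1 \<in> unit_disk" "z2 \<in> unit_disk" for z1 z2
    proof -
      have "G z1 - G z2 = ((s z1 - z1) - (s z2 - z2)) + cnj (\<epsilon> * (t z1 - t z2))"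
        by (simp add: G_def algebra_simps)
      then have i1: "norm (G z1 - G z2) \<le> norm ((s z1 - z1) - (s z2 - z2)) + norm (cnj (\<epsilon> * (t z1 - t z2)))"
        by (simp only: norm_triangle_ineq)
      have e: "norm (cnj (\<epsilon> * (t z1 - t z2))) = norm (t z1 - t z2)"
        using eps by (simp only: complex_mod_cnj norm_mult mult_1)
      from i1 e have "norm (G z1 - G z2) \<le> norm ((s z1 - z1) - (s z2 - z2)) + norm (t z1 - t z2)"
        by linarith
      also have "\<dots> \<le> Ka * norm (z1 - z2) + Kb * norm (z1 - z2)"
        using LA[OF that] LB[OF that] by simp
      also have "\<dots> \<le> 1/2 * norm (z1 - z2)"
      proof -
        have "Ka * norm (z1 - z2) + Kb * norm (z1 - z2) = (Ka + Kb) * norm (z1 - z2)"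
          by (simp add: algebra_simps)
        also have "\<dots> \<le> 1/2 * norm (z1 - z2)"
          using KaKb by (intro mult_right_mono) auto
        finally show ?thesis .
      qed
      finally show ?thesis .
    qed
    have SG: "norm (of_real u * G z0 - G (of_real u * z0)) \<le> (1 - u) / 2"
      if "z0 \<in> unit_disk" "0 \<le> u" "u \<le> 1" for z0 u
    proof -
      have "of_real u * G z0 - G (of_real u * z0) =
          (of_real u * (s z0 - z0) - (s (of_real u * z0) - of_real u * z0))
          + cnj (\<epsilon> * (of_real u * t z0 - t (of_real u * z0)))"
        by (simp add: G_def algebra_simps)
      then have i1: "norm (of_real u * G z0 - G (of_real u * z0)) \<le>
          norm (of_real u * (s z0 - z0) - (s (of_real u * z0) - of_real u * z0))
          + norm (cnj (\<epsilon> * (of_real u * t z0 - t (of_real u * z0))))"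
        by (simp only: norm_triangle_ineq)
      have e: "norm (cnj (\<epsilon> * (of_real u * t z0 - t (of_real u * z0)))) = norm (of_real u * t z0 - t (of_real u * z0))"
        using eps by (simp only: complex_mod_cnj norm_mult mult_1)
      from i1 e have "norm (of_real u * G z0 - G (of_real u * z0)) \<le>
          norm (of_real u * (s z0 - z0) - (s (of_real u * z0) - of_real u * z0))
          + norm (of_real u * t z0 - t (of_real u * z0))" by linarith
      also have "\<dots> \<le> (1 - u) * Ka + (1 - u) * Kb"
        using SA[OF that] SB[OF that] by simp
      also have "\<dots> \<le> (1 - u) / 2"
      proof -
        have "(1 - u) * Ka + (1 - u) * Kb = (1 - u) * (Ka + Kb)"
          by (simp add: algebra_simps)
        also have "\<dots> \<le> (1 - u) * (1/2)"
          using KaKb that by (intro mult_left_mono) auto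
        finally show ?thesis by simp
      qed
      finally show ?thesis .
    qed
    have FP: "y \<in> f ` unit_disk"
      if "z0 \<in> unit_disk" "0 \<le> R" "cball z0 R \<subseteq> unit_disk" "norm (y - f z0) \<le> R / 2" for z0 R y
    proof -
      define T where "T z = y - G z" for z
      have "\<exists>!x\<in>cball z0 R. T x = x"
      proof (rule Banach_fix[where c = "1/2"])
        show "complete (cball z0 R)" by (rule compact_imp_complete[OF compact_cball])
        show "cball z0 R \<noteq> {}" using that(2) by simp
        show "T ` cball z0 R \<subseteq> cball z0 R"
        proof
          fix x assume "x \<in> T ` cball z0 R"
          then obtain z where z: "z \<in> cball z0 R" "x = T z" by auto
          have zU: "z \<in> unit_disk" using z that(3) by auto
          have "z0 - x = (f z0 - y) + (G z - G z0)" using z(2) by (simp add: T_def fG)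
          then have "norm (z0 - x) \<le> norm (y - f z0) + norm (G z - G z0)"
            by (metis norm_minus_commute norm_triangle_ineq)
          also have "\<dots> \<le> R/2 + 1/2 * norm (z - z0)"
            using that(4) LG[OF zU that(1)] by simp
          also have "\<dots> \<le> R" using z(1) by (simp add: dist_norm norm_minus_commute)
          finally show "x \<in> cball z0 R" by (simp add: dist_norm)
        qed
        fix x1 x2 assume "x1 \<in> cball z0 R" "x2 \<in> cball z0 R"
        then have "x1 \<in> unit_disk" "x2 \<in> unit_disk" using that(3) by auto
        then show "dist (T x1) (T x2) \<le> 1/2 * dist x1 x2"
          using LG[of x2 x1] by (simp add: T_def dist_norm norm_minus_commute)
      qed simp_all
      then obtain x where x: "x \<in> cball z0 R" "T x = x" by auto
      then have "f x = y" by (simp add: T_def fG algebra_simps)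
      moreover have "x \<in> unit_disk" using x that(3) by auto
      ultimately show ?thesis by auto
    qed
    define D where "D = f ` unit_disk"
    have inU: "z \<in> unit_disk \<longleftrightarrow> norm z < 1" for z by (simp add: unit_disk_def)
    have f0: "f 0 = 0" by (simp add: f_def harm_def s00 t00)
    have D0: "0 \<in> D" unfolding D_def using f0 inU[of 0] by (metis image_eqI norm_zero zero_less_one)
    have openD: "open D"
      unfolding open_contains_ball
    proof
      fix y assume "y \<in> D"
      then obtain z0 where z0: "z0 \<in> unit_disk" "y = f z0" by (auto simp: D_def)
      define R where "R = (1 - norm z0) / 2"
      have R0: "R > 0" using z0 inU by (simp add: R_def)
      have cb: "cball z0 R \<subseteq> unit_disk"
      proof
        fix x assume "x \<in> cball z0 R"
        then have "norm (x - z0) \<le> R" by (simp add: dist_norm norm_minus_commute)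
        then have "norm x \<le> norm z0 + R" using norm_triangle_ineq2[of x z0] by linarith
        moreover have "norm z0 < 1" using z0(1) by (simp add: unit_disk_def)
        ultimately have "norm x < 1" by (simp add: R_def field_simps)
        then show "x \<in> unit_disk" by (simp add: unit_disk_def)
      qed
      have "ball y (R/2) \<subseteq> D"
      proof
        fix y' assume "y' \<in> ball y (R/2)"
        then have "norm (y' - f z0) \<le> R/2" using z0 by (simp add: dist_norm norm_minus_commute)
        then show "y' \<in> D" unfolding D_def using FP[OF z0(1) _ cb] R0 by simp
      qed
      then show "\<exists>e>0. ball y e \<subseteq> D" using R0 by (intro exI[of _ "R/2"]) simp
    qed
    have star: "of_real u * y \<in> D" if yD: "y \<in> D" and uu: "0 \<le> u" "u \<le> 1" for y u
    proof (cases "u = 0")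
      case True then show ?thesis using D0 by simp
    next
      case False
      then have u0: "0 < u" using uu by simp
      obtain z0 where z0: "z0 \<in> unit_disk" "y = f z0" using yD by (auto simp: D_def)
      define c0 where "c0 = of_real u * z0"
      have nz0: "norm z0 < 1" using z0 inU by simp
      have "u * norm z0 < u" using u0 nz0 by simp
      have cb: "cball c0 (1 - u) \<subseteq> unit_disk"
      proof
        fix x assume "x \<in> cball c0 (1 - u)"
        then have "norm (x - c0) \<le> 1 - u" by (simp add: dist_norm norm_minus_commute)
        moreover have "norm c0 = u * norm z0" using u0 by (simp add: c0_def norm_mult)
        ultimately have "norm x \<le> u * norm z0 + (1 - u)" using norm_triangle_ineq2[of x c0] by linarith
        then show "x \<in> unit_disk" using inU \<open>u * norm z0 < u\<close> by simp
      qed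
      have c0U: "c0 \<in> unit_disk" using cb uu(2) by (auto simp: dist_norm)
      have "of_real u * y - f c0 = of_real u * G z0 - G (of_real u * z0)"
        using z0 by (simp add: fG c0_def algebra_simps)
      then have "norm (of_real u * y - f c0) \<le> (1 - u) / 2" using SG[OF z0(1) uu] by simp
      then show ?thesis unfolding D_def using FP[OF c0U _ cb] uu(2) by simp
    qed
    have starD: "starlike D"
      unfolding starlike_def
    proof (intro bexI[OF _ D0] ballI subsetI)
      fix y x assume y: "y \<in> D" and "x \<in> closed_segment 0 y"
      then obtain u where "0 \<le> u" "u \<le> 1" "x = of_real u * y"
        by (auto simp: closed_segment_def scaleR_conv_of_real)
      then show "x \<in> D" using star[OF y] by simp
    qed
    have sc: "simply_connected D" by (rule starlike_imp_simply_connected[OF starD])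
    have conn: "connected D" by (rule starlike_imp_connected[OF starD])
    define HL where "HL = {(p, d). d = p \<and> p \<notin> D \<and> (\<forall>l::real. 0 < l \<and> l < 1 \<longrightarrow> of_real l * p \<in> D)}"
    have HLnz: "\<forall>(p, d)\<in>HL. d \<noteq> 0" using D0 by (auto simp: HL_def)
    have HLsub: "half_line p p \<subseteq> - D" if "(p, p) \<in> HL" for p
    proof
      fix x assume "x \<in> half_line p p"
      then obtain r where r: "r \<ge> 0" "x = p + of_real r * p" by (auto simp: half_line_def)
      show "x \<in> - D"
      proof
        assume "x \<in> D"
        then have "of_real (1/(1+r)) * x \<in> D" using r by (intro star) auto
        moreover have "of_real (1/(1+r)) * x = p"
        proof -
          have "of_real (1/(1+r)) * x = (of_real (1/(1+r)) * of_real (1+r)) * p"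
            unfolding r(2) of_real_add of_real_1 by algebra
          also have "of_real (1/(1+r)) * of_real (1+r) = (1::complex)"
          proof -
            have "(1/(1+r)) * (1+r) = (1::real)" using r(1) by simp
            then show ?thesis by (metis of_real_mult of_real_1)
          qed
          finally show ?thesis by simp
        qed
        ultimately show False using that by (auto simp: HL_def)
      qed
    qed
    have noncross: "\<forall>(p, d)\<in>HL. \<forall>(q, e)\<in>HL. half_line p d \<noteq> half_line q e \<longrightarrow>
             open_half_line p d \<inter> open_half_line q e = {}"
    proof -
      have nc: "open_half_line p d \<inter> open_half_line q e = {}"
        if pH: "(p, d) \<in> HL" and qH: "(q, e) \<in> HL" and ne: "half_line p d \<noteq> half_line q e" for p d q e
      proof (rule equals0I)
      fix x assume "x \<in> open_half_line p d \<inter> open_half_line q e"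
      then have x1: "x \<in> open_half_line p d" and x2: "x \<in> open_half_line q e" by auto
      have de: "d = p" "e = q" using pH qH by (auto simp: HL_def)
      obtain r where r: "r > 0" "x = p + of_real r * p" using x1 de by (auto simp: open_half_line_def)
      obtain r' where r': "r' > 0" "x = q + of_real r' * q" using x2 de by (auto simp: open_half_line_def)
      define \<mu> where "\<mu> = (1 + r') / (1 + r)"
      have mu0: "\<mu> > 0" using r r' by (simp add: \<mu>_def)
      have pmq: "p = of_real \<mu> * q"
      proof -
        have h: "of_real (1 + r) * p = of_real (1 + r') * q" using r r' by (simp add: algebra_simps)
        have nz: "(of_real (1+r) :: complex) \<noteq> 0" using r(1) by (simp only: of_real_eq_0_iff)
        have "of_real \<mu> * q = (of_real (1+r') * q) / of_real (1+r)"
          unfolding \<mu>_def of_real_divide by simp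
        also have "\<dots> = p" unfolding h[symmetric] using nz by simp
        finally show ?thesis by simp
      qed
      have "p = q"
      proof (cases "\<mu> < 1")
        case True
        then have "p \<in> D" using qH mu0 pmq by (auto simp: HL_def)
        then show ?thesis using pH by (auto simp: HL_def)
      next
        case False
        show ?thesis
        proof (cases "\<mu> = 1")
          case True then show ?thesis using pmq by simp
        next
          case False
          then have "1/\<mu> < 1" "0 < 1/\<mu>" using \<open>\<not> \<mu> < 1\<close> mu0 by auto
          moreover have "q = of_real (1/\<mu>) * p" using pmq mu0 by simp
          moreover have "\<forall>l. 0 < l \<and> l < 1 \<longrightarrow> of_real l * p \<in> D" using pH by (simp add: HL_def)
          ultimately have "q \<in> D" by metis
          then show ?thesis using qH by (auto simp: HL_def)
        qed
      qed
      then show False using ne de by simp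
    qed
      then show ?thesis by (simp only: Ball_def split_paired_All case_prod_conv) metis
    qed
    have cover: "- D = (\<Union>(p, d)\<in>HL. half_line p d)"
    proof
      show "(\<Union>(p, d)\<in>HL. half_line p d) \<subseteq> - D"
        using HLsub by (auto simp: HL_def)
    next
      show "- D \<subseteq> (\<Union>(p, d)\<in>HL. half_line p d)"
      proof
        fix q assume q: "q \<in> - D"
        define S where "S = {u \<in> {0..1::real}. of_real u * q \<notin> D}"
        have "closed S"
        proof -
          have "S = {0..1} \<inter> ((\<lambda>u. of_real u * q) -` (- D))" by (auto simp: S_def)
          moreover have "closed ((\<lambda>u::real. of_real u * q) -` (- D))"
            using openD by (intro closed_vimage) (auto intro!: continuous_intros)
          ultimately show ?thesis by auto
        qed
        moreover have "1 \<in> S" using q by (simp add: S_def)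
        moreover have "bdd_below S" by (auto simp: S_def bdd_below_def)
        ultimately have u0S: "Inf S \<in> S" using closed_contains_Inf by blast
        define u0 where "u0 = Inf S"
        have u01: "0 \<le> u0" "u0 \<le> 1" "of_real u0 * q \<notin> D" using u0S by (auto simp: S_def u0_def)
        have u0p: "u0 > 0" using u01 D0 by (cases "u0 = 0") auto
        define p where "p = of_real u0 * q"
        have "(p, p) \<in> HL"
          unfolding HL_def
        proof (clarify, intro conjI allI impI)
          show "p = p" by (rule refl)
          show "p \<notin> D" using u01 by (simp add: p_def)
          fix l :: real assume l: "0 < l \<and> l < 1"
          show "of_real l * p \<in> D"
          proof (rule ccontr)
            assume "of_real l * p \<notin> D"
            then have "l * u0 \<in> S" using l u01 u0p
              by (auto simp: S_def p_def mult_le_one algebra_simps)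
            then have "u0 \<le> l * u0" unfolding u0_def by (rule cInf_lower) (auto simp: S_def bdd_below_def)
            then show False using l u0p by simp
          qed
        qed
        moreover have "q \<in> half_line p p"
          unfolding half_line_def
        proof (intro CollectI exI conjI)
          show "0 \<le> 1/u0 - 1" using u01 u0p by simp
          show "q = p + of_real (1/u0 - 1) * p" using u0p by (simp add: p_def field_simps)
        qed
        ultimately show "q \<in> (\<Union>(p, d)\<in>HL. half_line p d)" by auto
      qed
    qed
    have inj: "inj_on f unit_disk"
    proof (rule inj_onI)
      fix x y assume xy: "x \<in> unit_disk" "y \<in> unit_disk" "f x = f y"
      then have "x - y = G y - G x" by (simp add: fG algebra_simps)
      then have "norm (x - y) \<le> 1/2 * norm (x - y)" using LG[OF xy(2,1)]
        by (simp add: norm_minus_commute)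
      then show "x = y" by simp
    qed
    have "close_to_convex_domain D"
      unfolding close_to_convex_domain_def
      using openD conn D0 sc HLnz noncross cover by blast
    then show ?thesis using inj by (simp add: close_to_convex_in_U_def D_def f_def)
  qed
  show ?thesis unfolding stable_harmonic_ctc_def using sp ctc by blast
qed

end
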